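(* If $\mathcal{O}$ contains only upwards closed modalities, then $\mathcal{O}$ is decomposable if and only if for all sets $X,Y$, all relations $R\subseteq X\times Y$ and all $t\in TTX$, $r\in TTY$, $t\,\mathcal{O}(\mathcal{O}(R))\,r$ implies $\mu t\,\mathcal{O}(R)\,\mu r$.
   Context: $\Sigma$ is a signature of effect operations with arities $\alpha^n\to\alpha$, $\mathbf{N}\times\alpha^n\to\alpha$, $\alpha^{\mathbf{N}}\to\alpha$ or $\mathbf{N}\times\alpha^{\mathbf{N}}\to\alpha$. $TX$ is the set of possibly infinite labelled trees with leaves $\bot$ or elements of $X$ and internal nodes labelled by operations (or $\sigma_m$, $m\in\mathbb{N}$) with children according to arity; $t\le t'$ iff $t$ is obtained from $t'$ by replacing subtrees with $\bot$. $\mu:TTX\to TX$ replaces each leaf of a tree of trees by that tree. $\mathbf{1}=\{*\}$. A set $\mathcal{O}$ of modalities is given with $[\![o]\!]\subseteq T\mathbf{1}$; upwards closed means $[\![o]\!]$ upward closed under $\le$. $t[\in P]\in T\mathbf{1}$ replaces leaves in $P$ by $*$ and other $X$-leaves by $\bot$; $o(A)=\{t\in TX\mid t[\in A]\in[\![o]\!]\}$. $R[A]=\{y\mid\exists x\in A,\ xRy\}$; $\mathcal{O}$-relator: $t\,\mathcal{O}(R)\,t'$ iff $\forall A\subseteq X\ \forall o\in\mathcal{O}$, $t\in o(A)\Rightarrow t'\in o(R[A])$. $\mathcal{T}$ is the least class of formulas containing $o(\top),o(\bot)$ ($o\in\mathcal{O}$) closed under arbitrary $\bigvee,\bigwedge$,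 with $[\![o(\top)]\!]=o(\{*\})$, $[\![o(\bot)]\!]=o(\emptyset)$, unions/intersections; $t\trianglelefteq t'$ on $T\mathbf{1}$ iff $\forall\Phi\in\mathcal{T}$, $t\in[\![\Phi]\!]\Rightarrow t'\in[\![\Phi]\!]$; $r\preccurlyeq r'$ on $TT\mathbf{1}$ iff $\forall o\,\forall\Phi\in\mathcal{T}$, $r\in o([\![\Phi]\!])\Rightarrow r'\in o([\![\Phi]\!])$. $\mathcal{O}$ is decomposable if $r\preccurlyeq r'$ implies $\mu r\trianglelefteq\mu r'$. *)

theory Defs
  imports Main
begin

text \<open>Labels of type 'l are the operation
 symbols (including the parametrised symbols sigma_m); ar l = Some n means arity n,
 ar l = None means countably infinite arity (children indexed by nat).
 Children at positions outside the arity are required to be Bot (see wf_tree).\<close>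

codatatype ('l, 'x) etree = Bot | Leaf 'x | Node 'l "nat \<Rightarrow> ('l, 'x) etree"

definition in_ar :: "('l \<Rightarrow> nat option) \<Rightarrow> 'l \<Rightarrow> nat \<Rightarrow> bool" where
  "in_ar ar l i = (case ar l of None \<Rightarrow> True | Some n \<Rightarrow> i < n)"

coinductive wf_tree :: "('l \<Rightarrow> nat option) \<Rightarrow> 'x set \<Rightarrow> ('l, 'x) etree \<Rightarrow> bool"
  for ar X where
  wf_Bot: "wf_tree ar X Bot"
| wf_Leaf: "x \<in> X \<Longrightarrow> wf_tree ar X (Leaf x)"
| wf_Node: "(\<forall>i. in_ar ar l i \<longrightarrow> wf_tree ar X (ts i)) \<Longrightarrow>
            (\<forall>i. \<not> in_ar ar l i \<longrightarrow> ts i = Bot) \<Longrightarrow> wf_tree ar X (Node l ts)"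

definition Tr :: "('l \<Rightarrow> nat option) \<Rightarrow> 'x set \<Rightarrow> ('l, 'x) etree set" where
  "Tr ar X = {t. wf_tree ar X t}"

coinductive le_tree :: "('l, 'x) etree \<Rightarrow> ('l, 'x) etree \<Rightarrow> bool" where
  le_Bot: "le_tree Bot t"
| le_Leaf: "le_tree (Leaf x) (Leaf x)"
| le_Node: "(\<forall>i. le_tree (ts i) (ts' i)) \<Longrightarrow> le_tree (Node l ts) (Node l ts')"

definition upclosed :: "('l \<Rightarrow> nat option) \<Rightarrow> ('l, unit) etree set \<Rightarrow> bool" where
  "upclosed ar S = (\<forall>t\<in>S. \<forall>t'\<in>Tr ar UNIV. le_tree t t' \<longrightarrow> t' \<in> S)"

primcorec join_aux :: "('l, 'x) etree + ('l, ('l, 'x) etree) etree \<Rightarrow> ('l, 'x) etree" where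
  "join_aux s = (case s of
      Inl t \<Rightarrow> (case t of Bot \<Rightarrow> Bot | Leaf x \<Rightarrow> Leaf x
                 | Node l ts \<Rightarrow> Node l (\<lambda>i. join_aux (Inl (ts i))))
    | Inr r \<Rightarrow> (case r of Bot \<Rightarrow> Bot
                 | Leaf t \<Rightarrow> (case t of Bot \<Rightarrow> Bot | Leaf x \<Rightarrow> Leaf x
                      | Node l ts \<Rightarrow> Node l (\<lambda>i. join_aux (Inl (ts i))))
                 | Node l rs \<Rightarrow> Node l (\<lambda>i. join_aux (Inr (rs i)))))"

definition join :: "('l, ('l, 'x) etree) etree \<Rightarrow> ('l, 'x) etree" where
  "join r = join_aux (Inr r)"

primcorec restr :: "'x set \<Rightarrow> ('l, 'x) etree \<Rightarrow> ('l, unit) etree" where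
  "restr P t = (case t of Bot \<Rightarrow> Bot
      | Leaf x \<Rightarrow> (if x \<in> P then Leaf () else Bot)
      | Node l ts \<Rightarrow> Node l (\<lambda>i. restr P (ts i)))"

definition omod :: "('l \<Rightarrow> nat option) \<Rightarrow> ('m \<Rightarrow> ('l, unit) etree set) \<Rightarrow> 'm
    \<Rightarrow> 'x set \<Rightarrow> 'x set \<Rightarrow> ('l, 'x) etree set" where
  "omod ar sem m X A = {t \<in> Tr ar X. restr A t \<in> sem m}"

definition rel_O :: "('l \<Rightarrow> nat option) \<Rightarrow> 'm set \<Rightarrow> ('m \<Rightarrow> ('l, unit) etree set)
    \<Rightarrow> 'x set \<Rightarrow> 'y set \<Rightarrow> ('x \<times> 'y) set \<Rightarrow> (('l, 'x) etree \<times> ('l, 'y) etree) set" where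
  "rel_O ar Om sem X Y R = {(t, t'). t \<in> Tr ar X \<and> t' \<in> Tr ar Y \<and>
      (\<forall>A. A \<subseteq> X \<longrightarrow> (\<forall>m\<in>Om. t \<in> omod ar sem m X A \<longrightarrow> t' \<in> omod ar sem m Y (R `` A)))}"

text \<open>Denotations of the formulas in the class \<T>: generated from o(top), o(bot)
  by arbitrary unions and intersections (empty conjunction = T1).\<close>
inductive_set Tsem :: "('l \<Rightarrow> nat option) \<Rightarrow> 'm set \<Rightarrow> ('m \<Rightarrow> ('l, unit) etree set)
    \<Rightarrow> ('l, unit) etree set set" for ar Om sem where
  T_top: "m \<in> Om \<Longrightarrow> omod ar sem m UNIV {()} \<in> Tsem ar Om sem"
| T_bot: "m \<in> Om \<Longrightarrow> omod ar sem m UNIV {} \<in> Tsem ar Om sem"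
| T_Or: "(\<forall>\<Phi>\<in>S. \<Phi> \<in> Tsem ar Om sem) \<Longrightarrow> \<Union>S \<in> Tsem ar Om sem"
| T_And: "(\<forall>\<Phi>\<in>S. \<Phi> \<in> Tsem ar Om sem) \<Longrightarrow> Tr ar UNIV \<inter> \<Inter>S \<in> Tsem ar Om sem"

definition tle :: "('l \<Rightarrow> nat option) \<Rightarrow> 'm set \<Rightarrow> ('m \<Rightarrow> ('l, unit) etree set)
    \<Rightarrow> ('l, unit) etree \<Rightarrow> ('l, unit) etree \<Rightarrow> bool" where
  "tle ar Om sem t t' = (\<forall>\<Phi>\<in>Tsem ar Om sem. t \<in> \<Phi> \<longrightarrow> t' \<in> \<Phi>)"

definition rle :: "('l \<Rightarrow> nat option) \<Rightarrow> 'm set \<Rightarrow> ('m \<Rightarrow> ('l, unit) etree set)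
    \<Rightarrow> ('l, ('l, unit) etree) etree \<Rightarrow> ('l, ('l, unit) etree) etree \<Rightarrow> bool" where
  "rle ar Om sem r r' = (\<forall>m\<in>Om. \<forall>\<Phi>\<in>Tsem ar Om sem.
      r \<in> omod ar sem m (Tr ar UNIV) \<Phi> \<longrightarrow> r' \<in> omod ar sem m (Tr ar UNIV) \<Phi>)"

definition decomposable :: "('l \<Rightarrow> nat option) \<Rightarrow> 'm set \<Rightarrow> ('m \<Rightarrow> ('l, unit) etree set) \<Rightarrow> bool" where
  "decomposable ar Om sem = (\<forall>r\<in>Tr ar (Tr ar UNIV). \<forall>r'\<in>Tr ar (Tr ar UNIV).
      rle ar Om sem r r' \<longrightarrow> tle ar Om sem (join r) (join r'))"

definition lift_prop :: "('l \<Rightarrow> nat option) \<Rightarrow> 'm set \<Rightarrow> ('m \<Rightarrow> ('l, unit) etree set)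
    \<Rightarrow> 'x set \<Rightarrow> 'y set \<Rightarrow> bool" where
  "lift_prop ar Om sem X Y = (\<forall>R t r. R \<subseteq> X \<times> Y \<longrightarrow>
      (t, r) \<in> rel_O ar Om sem (Tr ar X) (Tr ar Y) (rel_O ar Om sem X Y R) \<longrightarrow>
      (join t, join r) \<in> rel_O ar Om sem X Y R)"

end

theory Submission
  imports Defs
begin

lemma ja_simps[simp]:
  "join_aux (Inl Bot) = Bot" "join_aux (Inl (Leaf x)) = Leaf x"
  "join_aux (Inl (Node l ts)) = Node l (\<lambda>i. join_aux (Inl (ts i)))"
  "join_aux (Inr Bot) = Bot"
  "join_aux (Inr (Leaf s)) = join_aux (Inl s)"
  "join_aux (Inr (Node l rs)) = Node l (\<lambda>i. join_aux (Inr (rs i)))"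
  by (subst join_aux.code; simp split: etree.splits)+

lemma ja_Inl[simp]: "join_aux (Inl s) = s"
  apply (coinduction arbitrary: s rule: etree.coinduct_strong)
  subgoal for s by (cases s) (auto simp: rel_fun_def)
  done

lemma join_simps[simp]: "join Bot = Bot" "join (Leaf s) = s"
  "join (Node l rs) = Node l (\<lambda>i. join (rs i))"
  by (simp_all add: join_def)

lemma restr_simps[simp]: "restr P Bot = Bot" "restr P (Leaf x) = (if x \<in> P then Leaf () else Bot)"
  "restr P (Node l ts) = Node l (\<lambda>i. restr P (ts i))"
  by (subst restr.code; simp)+

lemma wf_join: "wf_tree ar (Tr ar X) t \<Longrightarrow> wf_tree ar X (join t)"
proof -
  assume h: "wf_tree ar (Tr ar X) t"
  have "wf_tree ar X u" if "wf_tree ar X u \<or> (\<exists>t. u = join t \<and> wf_tree ar (Tr ar X) t)" for u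
    using that
  proof (coinduction arbitrary: u rule: wf_tree.coinduct)
    case (wf_tree u)
    then show ?case
    proof
      assume "wf_tree ar X u" then show ?thesis by (cases rule: wf_tree.cases) auto
    next
      assume "\<exists>t. u = join t \<and> wf_tree ar (Tr ar X) t"
      then obtain t where u: "u = join t" and t: "wf_tree ar (Tr ar X) t" by blast
      from t show ?thesis
      proof (cases rule: wf_tree.cases)
        case (wf_Leaf s)
        then have "wf_tree ar X s" by (simp add: Tr_def)
        then show ?thesis using u wf_Leaf by (cases rule: wf_tree.cases) auto
      qed (use u in auto)
    qed
  qed
  then show ?thesis using h by blast
qed

lemma wf_map: "wf_tree ar X t \<Longrightarrow> f ` X \<subseteq> Y \<Longrightarrow> wf_tree ar Y (map_etree id f t)"
proof -
  assume h: "wf_tree ar X t" "f ` X \<subseteq> Y"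
  have "wf_tree ar Y u" if "\<exists>t. u = map_etree id f t \<and> wf_tree ar X t" for u
    using that
  proof (coinduction arbitrary: u rule: wf_tree.coinduct)
    case (wf_tree u)
    then obtain t where u: "u = map_etree id f t" and t: "wf_tree ar X t" by blast
    from t show ?case by (cases rule: wf_tree.cases) (use u h in auto)
  qed
  then show ?thesis using h by blast
qed

lemma wf_restr: "wf_tree ar X t \<Longrightarrow> wf_tree ar UNIV (restr P t)"
proof -
  assume h: "wf_tree ar X t"
  have "wf_tree ar UNIV u" if "\<exists>t. u = restr P t \<and> wf_tree ar X t" for u
    using that
  proof (coinduction arbitrary: u rule: wf_tree.coinduct)
    case (wf_tree u)
    then obtain t where u: "u = restr P t" and t: "wf_tree ar X t" by blast
    from t show ?case by (cases rule: wf_tree.cases) (use u in auto)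
  qed
  then show ?thesis using h by blast
qed

lemma le_restr: "wf_tree ar X t \<Longrightarrow> P \<inter> X \<subseteq> Q \<Longrightarrow> le_tree (restr P t) (restr Q t)"
proof -
  assume h: "wf_tree ar X t" "P \<inter> X \<subseteq> Q"
  have "le_tree u v" if "\<exists>t. u = restr P t \<and> v = restr Q t \<and> wf_tree ar X t" for u v
    using that
  proof (coinduction arbitrary: u v rule: le_tree.coinduct)
    case (le_tree u v)
    then obtain t where u: "u = restr P t" "v = restr Q t" and t: "wf_tree ar X t" by blast
    from t show ?case by (cases rule: wf_tree.cases) (insert u h, auto, metis wf_tree.wf_Bot)
  qed
  then show ?thesis using h by blast
qed

lemma restr_cong: "wf_tree ar X t \<Longrightarrow> P \<inter> X = Q \<inter> X \<Longrightarrow> restr P t = restr Q t"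
proof -
  assume h: "wf_tree ar X t" "P \<inter> X = Q \<inter> X"
  have "u = v" if "\<exists>t. u = restr P t \<and> v = restr Q t \<and> wf_tree ar X t" for u v
    using that
  proof (coinduction arbitrary: u v rule: etree.coinduct)
    case (Eq_etree u v)
    then obtain t where u: "u = restr P t" "v = restr Q t" and t: "wf_tree ar X t" by blast
    from t show ?case by (cases rule: wf_tree.cases) (insert u h, auto simp: rel_fun_def, metis wf_tree.wf_Bot)
  qed
  then show ?thesis using h by blast
qed

lemma restr_map: "restr P (map_etree id f t) = restr (f -` P) t"
  apply (coinduction arbitrary: t rule: etree.coinduct)
  subgoal for t by (cases t) (auto simp: rel_fun_def)
  done

lemma restr_UNIV: "restr UNIV (s::('l, unit) etree) = s"
  apply (coinduction arbitrary: s rule: etree.coinduct_strong)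
  subgoal for s by (cases s) (auto simp: rel_fun_def)
  done

lemma join_restr: "restr A (join t) = join (map_etree id (restr A) t)"
  apply (coinduction arbitrary: t rule: etree.coinduct_strong)
  subgoal for t by (cases t) (auto simp: rel_fun_def)
  done

lemma join_map: "join (map_etree id (map_etree id g) r) = map_etree id g (join r)"
  apply (coinduction arbitrary: r rule: etree.coinduct_strong)
  subgoal for r by (cases r) (auto simp: rel_fun_def)
  done

lemma restr_empty: "restr {} (restr A s) = restr {} s"
  apply (coinduction arbitrary: s rule: etree.coinduct_strong)
  subgoal for s by (cases s) (auto simp: rel_fun_def)
  done

lemma unit_UNIV: "{()} = UNIV" by auto

lemma omod_top: "(s \<in> omod ar sem m UNIV {()}) = (s \<in> Tr ar UNIV \<and> s \<in> sem m)"
  by (simp add: omod_def unit_UNIV restr_UNIV)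

lemma restr_emb: "restr A (map_etree id (\<lambda>_. c) s) = restr (if c \<in> A then UNIV else {}) s"
  by (simp add: restr_map)

lemma tle_basic:
  assumes "t' \<in> Tr ar UNIV"
    "\<forall>m\<in>Om. t \<in> omod ar sem m UNIV {()} \<longrightarrow> t' \<in> omod ar sem m UNIV {()}"
    "\<forall>m\<in>Om. t \<in> omod ar sem m UNIV {} \<longrightarrow> t' \<in> omod ar sem m UNIV {}"
  shows "\<forall>\<Phi>\<in>Tsem ar Om sem. t \<in> \<Phi> \<longrightarrow> t' \<in> \<Phi>"
proof
  fix \<Phi> assume "\<Phi> \<in> Tsem ar Om sem"
  then show "t \<in> \<Phi> \<longrightarrow> t' \<in> \<Phi>"
    by (induction rule: Tsem.induct) (use assms in auto)
qed

lemma dir1: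
  assumes sem_T1: "\<forall>m\<in>Om. sem m \<subseteq> Tr ar UNIV"
    and up: "\<forall>m\<in>Om. upclosed ar (sem m)"
    and dec: "decomposable ar Om sem"
  shows "lift_prop ar Om sem (X::'x set) (Y::'y set)"
  unfolding lift_prop_def
proof (intro allI impI)
  fix R t r
  assume RXY: "R \<subseteq> X \<times> Y"
    and tr: "(t, r) \<in> rel_O ar Om sem (Tr ar X) (Tr ar Y) (rel_O ar Om sem X Y R)"
  define OR where "OR = rel_O ar Om sem X Y R"
  have tT: "t \<in> Tr ar (Tr ar X)" and rT: "r \<in> Tr ar (Tr ar Y)"
    and trm: "\<And>B m. B \<subseteq> Tr ar X \<Longrightarrow> m \<in> Om \<Longrightarrow> t \<in> omod ar sem m (Tr ar X) B
        \<Longrightarrow> r \<in> omod ar sem m (Tr ar Y) (OR `` B)"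
    using tr by (auto simp: rel_O_def OR_def)
  have jt: "join t \<in> Tr ar X" using tT wf_join by (auto simp: Tr_def)
  have jr: "join r \<in> Tr ar Y" using rT wf_join by (auto simp: Tr_def)
  have "join r \<in> omod ar sem m Y (R `` A)"
    if AX: "A \<subseteq> X" and m: "m \<in> Om" and jA: "join t \<in> omod ar sem m X A" for A m
  proof -
    define t' where "t' = map_etree id (restr A) t"
    define r' where "r' = map_etree id (restr (R `` A)) r"
    have t'T: "t' \<in> Tr ar (Tr ar UNIV)"
      unfolding t'_def Tr_def using tT
      by (auto simp: Tr_def intro!: wf_map intro: wf_restr)
    have r'T: "r' \<in> Tr ar (Tr ar UNIV)"
      unfolding r'_def Tr_def using rT
      by (auto simp: Tr_def intro!: wf_map intro: wf_restr)
    have key: "\<forall>\<Phi>\<in>Tsem ar Om sem. restr A s \<in> \<Phi> \<longrightarrow> restr (R `` A) s' \<in> \<Phi>"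
      if ss: "(s, s') \<in> OR" for s s'
    proof (rule tle_basic)
      have sX: "s \<in> Tr ar X" and s'Y: "s' \<in> Tr ar Y"
        and sm: "\<And>A m. A \<subseteq> X \<Longrightarrow> m \<in> Om \<Longrightarrow> s \<in> omod ar sem m X A
          \<Longrightarrow> s' \<in> omod ar sem m Y (R `` A)"
        using ss by (auto simp: OR_def rel_O_def)
      show "restr (R `` A) s' \<in> Tr ar UNIV" using s'Y wf_restr by (auto simp: Tr_def)
      show "\<forall>m\<in>Om. restr A s \<in> omod ar sem m UNIV {()} \<longrightarrow> restr (R `` A) s' \<in> omod ar sem m UNIV {()}"
      proof (intro ballI impI)
        fix m assume m: "m \<in> Om" and h: "restr A s \<in> omod ar sem m UNIV {()}"
        then have "s \<in> omod ar sem m X A" using sX by (simp add: omod_def unit_UNIV restr_UNIV)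
        then have "s' \<in> omod ar sem m Y (R `` A)" using sm AX m by blast
        then show "restr (R `` A) s' \<in> omod ar sem m UNIV {()}"
          using s'Y wf_restr by (auto simp: omod_def unit_UNIV restr_UNIV Tr_def)
      qed
      show "\<forall>m\<in>Om. restr A s \<in> omod ar sem m UNIV {} \<longrightarrow> restr (R `` A) s' \<in> omod ar sem m UNIV {}"
      proof (intro ballI impI)
        fix m assume m: "m \<in> Om" and h: "restr A s \<in> omod ar sem m UNIV {}"
        then have "s \<in> omod ar sem m X {}" using sX by (simp add: omod_def restr_empty)
        then have "s' \<in> omod ar sem m Y (R `` {})" using sm m by blast
        then show "restr (R `` A) s' \<in> omod ar sem m UNIV {}"
          using s'Y wf_restr by (auto simp: omod_def Tr_def restr_empty)
      qed
    qed
    have "rle ar Om sem t' r'"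
      unfolding rle_def
    proof (intro ballI impI)
      fix m' \<Phi> assume m': "m' \<in> Om" and \<Phi>: "\<Phi> \<in> Tsem ar Om sem"
        and ht: "t' \<in> omod ar sem m' (Tr ar UNIV) \<Phi>"
      define B where "B = {s \<in> Tr ar X. restr A s \<in> \<Phi>}"
      have "restr \<Phi> t' = restr B t"
        unfolding t'_def restr_map
        by (rule restr_cong[where X = "Tr ar X"]) (use tT in \<open>auto simp: Tr_def B_def\<close>)
      then have "t \<in> omod ar sem m' (Tr ar X) B" using ht tT by (simp add: omod_def)
      then have rB: "r \<in> omod ar sem m' (Tr ar Y) (OR `` B)"
        using trm[of B m'] m' by (auto simp: B_def)
      define C where "C = restr (R `` A) -` \<Phi>"
      have "OR `` B \<inter> Tr ar Y \<subseteq> C"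
        using key \<Phi> by (auto simp: B_def C_def)
      then have le: "le_tree (restr (OR `` B) r) (restr C r)"
        using rT le_restr by (auto simp: Tr_def)
      have eq: "restr C r = restr \<Phi> r'" by (simp add: C_def r'_def restr_map)
      have "restr \<Phi> r' \<in> Tr ar UNIV" using r'T wf_restr by (auto simp: Tr_def)
      moreover have "restr (OR `` B) r \<in> sem m'" using rB by (simp add: omod_def)
      ultimately have "restr \<Phi> r' \<in> sem m'"
        using up m' le eq unfolding upclosed_def by metis
      then show "r' \<in> omod ar sem m' (Tr ar UNIV) \<Phi>" using r'T by (simp add: omod_def)
    qed
    then have tl: "tle ar Om sem (join t') (join r')"
      using dec t'T r'T by (auto simp: decomposable_def)
    have T1: "omod ar sem m UNIV {()} \<in> Tsem ar Om sem" using m by (rule Tsem.T_top)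
    have "join t' \<in> omod ar sem m UNIV {()}"
      using jA jt wf_restr by (auto simp: t'_def join_restr[symmetric] omod_def unit_UNIV restr_UNIV Tr_def)
    then have "join r' \<in> omod ar sem m UNIV {()}" using tl T1 by (auto simp: tle_def)
    then show ?thesis using jr by (auto simp: r'_def join_restr[symmetric] omod_def unit_UNIV restr_UNIV)
  qed
  then show "(join t, join r) \<in> rel_O ar Om sem X Y R"
    using jt jr by (auto simp: rel_O_def)
qed

lemma dir2:
  fixes ar :: "'l \<Rightarrow> nat option" and Om :: "'m set"
    and sem :: "'m \<Rightarrow> ('l, unit) etree set"
  assumes sem_T1: "\<forall>m\<in>Om. sem m \<subseteq> Tr ar UNIV"
    and up: "\<forall>m\<in>Om. upclosed ar (sem m)"
    and lp: "\<forall>(X::('l, unit) etree set) (Y::('l, unit) etree set). lift_prop ar Om sem X Y"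
  shows "decomposable ar Om sem"
  unfolding decomposable_def
proof (intro ballI impI)
  fix r r' :: "('l, ('l, unit) etree) etree"
  assume rT: "r \<in> Tr ar (Tr ar UNIV)" and r'T: "r' \<in> Tr ar (Tr ar UNIV)"
    and rl: "rle ar Om sem r r'"
  define c :: "('l, unit) etree" where "c = Bot"
  define X where "X = {c}"
  define R where "R = {(c, c)}"
  define emb :: "('l, unit) etree \<Rightarrow> ('l, ('l, unit) etree) etree"
    where "emb = map_etree id (\<lambda>_. c)"
  define OR where "OR = rel_O ar Om sem X X R"
  have RA: "A \<subseteq> X \<Longrightarrow> R `` A = A" for A by (auto simp: R_def X_def)
  have embT: "s \<in> Tr ar UNIV \<Longrightarrow> emb s \<in> Tr ar X" for s
    by (auto simp: Tr_def emb_def X_def intro!: wf_map)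
  have embTT: "s \<in> Tr ar (Tr ar UNIV) \<Longrightarrow> map_etree id emb s \<in> Tr ar (Tr ar X)" for s
    using embT by (auto simp: Tr_def intro!: wf_map)
  have remb: "restr A (emb s) = restr (if c \<in> A then UNIV else {}) s" for A s
    by (simp add: emb_def restr_emb)
  define T where "T = map_etree id emb r"
  define T' where "T' = map_etree id emb r'"
  have TT: "T \<in> Tr ar (Tr ar X)" using embTT rT by (simp add: T_def)
  have T'T: "T' \<in> Tr ar (Tr ar X)" using embTT r'T by (simp add: T'_def)
  have "(T, T') \<in> rel_O ar Om sem (Tr ar X) (Tr ar X) OR"
    unfolding rel_O_def
  proof (clarsimp simp: TT T'T)
    fix B m assume BX: "B \<subseteq> Tr ar X" and m: "m \<in> Om" and TB: "T \<in> omod ar sem m (Tr ar X) B"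
    define U where "U b = Tr ar UNIV \<inter> \<Inter>{\<Phi>' \<in> Tsem ar Om sem. b \<in> \<Phi>'}" for b
    define \<Phi> where "\<Phi> = \<Union>{U b | b. b \<in> Tr ar UNIV \<and> emb b \<in> B}"
    have "U b \<in> Tsem ar Om sem" for b unfolding U_def by (rule Tsem.T_And) auto
    then have \<Phi>T: "\<Phi> \<in> Tsem ar Om sem" unfolding \<Phi>_def by (intro Tsem.T_Or) auto
    have sub1: "emb -` B \<inter> Tr ar UNIV \<subseteq> \<Phi>" by (auto simp: \<Phi>_def U_def)
    have "le_tree (restr (emb -` B) r) (restr \<Phi> r)"
      using rT sub1 le_restr by (auto simp: Tr_def)
    moreover have "restr \<Phi> r \<in> Tr ar UNIV" using rT wf_restr by (auto simp: Tr_def)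
    moreover have "restr (emb -` B) r \<in> sem m" using TB by (simp add: omod_def T_def restr_map)
    ultimately have "restr \<Phi> r \<in> sem m" using up m unfolding upclosed_def by metis
    then have "r \<in> omod ar sem m (Tr ar UNIV) \<Phi>" using rT by (simp add: omod_def)
    then have "r' \<in> omod ar sem m (Tr ar UNIV) \<Phi>" using rl m \<Phi>T by (auto simp: rle_def)
    then have r'\<Phi>: "restr \<Phi> r' \<in> sem m" by (simp add: omod_def)
    have sub2: "\<Phi> \<inter> Tr ar UNIV \<subseteq> emb -` (OR `` B)"
    proof
      fix s assume "s \<in> \<Phi> \<inter> Tr ar UNIV"
      then obtain b where sT: "s \<in> Tr ar UNIV" and bT: "b \<in> Tr ar UNIV" and bB: "emb b \<in> B"
        and bs: "\<forall>\<Phi>'\<in>Tsem ar Om sem. b \<in> \<Phi>' \<longrightarrow> s \<in> \<Phi>'"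
        by (auto simp: \<Phi>_def U_def)
      have "(emb b, emb s) \<in> OR"
        unfolding OR_def rel_O_def
      proof (clarsimp simp: embT bT sT)
        fix A m' assume AX: "A \<subseteq> X" and m': "m' \<in> Om" and bA: "emb b \<in> omod ar sem m' X A"
        show "emb s \<in> omod ar sem m' X (R `` A)"
        proof (cases "c \<in> A")
          case True
          then have "b \<in> omod ar sem m' UNIV {()}"
            using bA bT by (simp add: omod_def remb unit_UNIV restr_UNIV)
          then have "s \<in> omod ar sem m' UNIV {()}" using bs Tsem.T_top[OF m'] by blast
          then show ?thesis using True RA[OF AX] embT[OF sT]
            by (simp add: omod_def remb unit_UNIV restr_UNIV)
        next
          case False
          then have "b \<in> omod ar sem m' UNIV {}"
            using bA bT by (simp add: omod_def remb)
          then have "s \<in> omod ar sem m' UNIV {}" using bs Tsem.T_bot[OF m'] by blast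
          then show ?thesis using False RA[OF AX] embT[OF sT]
            by (simp add: omod_def remb)
        qed
      qed
      then show "s \<in> emb -` (OR `` B)" using bB by auto
    qed
    have "le_tree (restr \<Phi> r') (restr (emb -` (OR `` B)) r')"
      using r'T sub2 le_restr by (auto simp: Tr_def)
    moreover have "restr (emb -` (OR `` B)) r' \<in> Tr ar UNIV" using r'T wf_restr by (auto simp: Tr_def)
    ultimately have "restr (emb -` (OR `` B)) r' \<in> sem m"
      using r'\<Phi> up m unfolding upclosed_def by metis
    then show "T' \<in> omod ar sem m (Tr ar X) (OR `` B)"
      using T'T by (simp add: omod_def T'_def restr_map)
  qed
  moreover have "R \<subseteq> X \<times> X" by (auto simp: R_def X_def)
  ultimately have J: "(join T, join T') \<in> OR"
    using lp unfolding lift_prop_def OR_def by blast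
  have jT: "join T = emb (join r)" by (simp add: T_def emb_def join_map)
  have jT': "join T' = emb (join r')" by (simp add: T'_def emb_def join_map)
  have jr': "join r' \<in> Tr ar UNIV" using r'T wf_join by (auto simp: Tr_def)
  have jm: "\<And>A m. A \<subseteq> X \<Longrightarrow> m \<in> Om \<Longrightarrow> emb (join r) \<in> omod ar sem m X A
      \<Longrightarrow> emb (join r') \<in> omod ar sem m X A"
    using J RA by (auto simp: OR_def rel_O_def jT jT')
  have jrT: "emb (join r) \<in> Tr ar X" using rT wf_join embT by (auto simp: Tr_def)
  show "tle ar Om sem (join r) (join r')"
    unfolding tle_def
  proof (rule tle_basic[OF jr'])
    show "\<forall>m\<in>Om. join r \<in> omod ar sem m UNIV {()} \<longrightarrow> join r' \<in> omod ar sem m UNIV {()}"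
    proof (intro ballI impI)
      fix m assume m: "m \<in> Om" and h: "join r \<in> omod ar sem m UNIV {()}"
      then have "emb (join r) \<in> omod ar sem m X X"
        using jrT by (simp add: omod_def remb X_def unit_UNIV restr_UNIV)
      then have "emb (join r') \<in> omod ar sem m X X" using jm m by blast
      then show "join r' \<in> omod ar sem m UNIV {()}"
        using jr' by (simp add: omod_def remb X_def unit_UNIV restr_UNIV)
    qed
    show "\<forall>m\<in>Om. join r \<in> omod ar sem m UNIV {} \<longrightarrow> join r' \<in> omod ar sem m UNIV {}"
    proof (intro ballI impI)
      fix m assume m: "m \<in> Om" and h: "join r \<in> omod ar sem m UNIV {}"
      then have "emb (join r) \<in> omod ar sem m X {}"
        using jrT by (simp add: omod_def remb)
      then have "emb (join r') \<in> omod ar sem m X {}" using jm m by blast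
      then show "join r' \<in> omod ar sem m UNIV {}"
        using jr' by (simp add: omod_def remb)
    qed
  qed
qed

theorem corollary5p10:
  fixes ar :: "'l \<Rightarrow> nat option" and Om :: "'m set"
    and sem :: "'m \<Rightarrow> ('l, unit) etree set"
  assumes sem_T1: "\<forall>m\<in>Om. sem m \<subseteq> Tr ar UNIV"
    and up: "\<forall>m\<in>Om. upclosed ar (sem m)"
  shows "(decomposable ar Om sem \<longrightarrow> (\<forall>(X::'x set) (Y::'y set). lift_prop ar Om sem X Y))
       \<and> ((\<forall>(X::('l, unit) etree set) (Y::('l, unit) etree set). lift_prop ar Om sem X Y)
            \<longrightarrow> decomposable ar Om sem)"
  using dir1[OF sem_T1 up] dir2[OF sem_T1 up] by blast

end
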